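(* Let $M$ be a finite monoid. The following are equivalent: (1) the relation $x\le_1 y \iff R(x)\subseteq R(xy)$ is total on $M$ (for all $x,y$, $x\le_1y$ or $y\le_1x$); (2) the relation $x\le_2 y\iff L(x)\subseteq L(yx)$ is total on $M$; (3) the relation $x\le_3 y\iff J(x)=J(xy)=J(yx)$ is total on $M$; (4) the two-sided ideals $J(x)$, $x\in M$, are totally ordered by inclusion, and $J(xy)=J(x)\cap J(y)$ for all $x,y\in M$. Whenever one of these holds, the relations $\le_1,\le_2,\le_3$ coincide. Furthermore, if $M$ is a submonoid of the monoid of endofunctions of a finite set $Q$ (with product $fg=f\circ g$), then these conditions are equivalent to: for all $f,g\in M$, $f\sqsubseteq g$ or $g\sqsubseteq f$, where $f\sqsubseteq g$ iff $\mathrm{Im}(f)\subseteq\mathrm{Im}(f\circ g)$.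
   Context: For $m$ in a monoid $M$: $J(m)=\{xmy: x,y\in M\}$ (two-sided ideal), $L(m)=\{xm:x\in M\}$ (left ideal), $R(m)=\{my:y\in M\}$ (right ideal). $\mathrm{Im}(f)$ denotes the image of a function $f$. *)

theory Defs
  imports "HOL-Algebra.Group" "HOL-Library.FuncSet"
begin

definition Jid :: "('a,'b) monoid_scheme \<Rightarrow> 'a \<Rightarrow> 'a set" where
  "Jid M m = {x \<otimes>\<^bsub>M\<^esub> m \<otimes>\<^bsub>M\<^esub> y | x y. x \<in> carrier M \<and> y \<in> carrier M}"

definition Lid :: "('a,'b) monoid_scheme \<Rightarrow> 'a \<Rightarrow> 'a set" where
  "Lid M m = {x \<otimes>\<^bsub>M\<^esub> m | x. x \<in> carrier M}"

definition Rid :: "('a,'b) monoid_scheme \<Rightarrow> 'a \<Rightarrow> 'a set" where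
  "Rid M m = {m \<otimes>\<^bsub>M\<^esub> y | y. y \<in> carrier M}"

definition le1 :: "('a,'b) monoid_scheme \<Rightarrow> 'a \<Rightarrow> 'a \<Rightarrow> bool" where
  "le1 M x y \<longleftrightarrow> Rid M x \<subseteq> Rid M (x \<otimes>\<^bsub>M\<^esub> y)"

definition le2 :: "('a,'b) monoid_scheme \<Rightarrow> 'a \<Rightarrow> 'a \<Rightarrow> bool" where
  "le2 M x y \<longleftrightarrow> Lid M x \<subseteq> Lid M (y \<otimes>\<^bsub>M\<^esub> x)"

definition le3 :: "('a,'b) monoid_scheme \<Rightarrow> 'a \<Rightarrow> 'a \<Rightarrow> bool" where
  "le3 M x y \<longleftrightarrow> Jid M x = Jid M (x \<otimes>\<^bsub>M\<^esub> y) \<and> Jid M x = Jid M (y \<otimes>\<^bsub>M\<^esub> x)"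

definition total_rel_on :: "'a set \<Rightarrow> ('a \<Rightarrow> 'a \<Rightarrow> bool) \<Rightarrow> bool" where
  "total_rel_on A r \<longleftrightarrow> (\<forall>x\<in>A. \<forall>y\<in>A. r x y \<or> r y x)"

definition cond4 :: "('a,'b) monoid_scheme \<Rightarrow> bool" where
  "cond4 M \<longleftrightarrow> (\<forall>x\<in>carrier M. \<forall>y\<in>carrier M. Jid M x \<subseteq> Jid M y \<or> Jid M y \<subseteq> Jid M x)
     \<and> (\<forall>x\<in>carrier M. \<forall>y\<in>carrier M. Jid M (x \<otimes>\<^bsub>M\<^esub> y) = Jid M x \<inter> Jid M y)"

text \<open>The monoid with carrier S, a set of endofunctions of Q (extensional functions on Q),
  product f g = f \<circ> g, unit the identity of Q.\<close>
definition fun_monoid :: "'q set \<Rightarrow> ('q \<Rightarrow> 'q) set \<Rightarrow> ('q \<Rightarrow> 'q) monoid" where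
  "fun_monoid Q S = \<lparr>carrier = S, mult = compose Q, one = restrict id Q\<rparr>"

definition img_le :: "'q set \<Rightarrow> ('q \<Rightarrow> 'q) \<Rightarrow> ('q \<Rightarrow> 'q) \<Rightarrow> bool" where
  "img_le Q f g \<longleftrightarrow> f ` Q \<subseteq> (compose Q f g) ` Q"

end

theory Submission
  imports Defs
begin

context monoid begin

lemma idem_pow:
  assumes fin: "finite (carrier G)" and z: "z \<in> carrier G"
  shows "\<exists>n>0. z [^] n \<otimes> z [^] n = z [^] (n::nat)"
proof -
  have "\<not> inj (\<lambda>k::nat. z [^] k)"
  proof
    assume "inj (\<lambda>k::nat. z [^] k)"
    moreover have "range (\<lambda>k::nat. z [^] k) \<subseteq> carrier G" using z by auto
    hence "finite (range (\<lambda>k::nat. z [^] k))" using fin finite_subset by blast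
    ultimately have "finite (UNIV::nat set)" using finite_imageD by blast
    thus False by simp
  qed
  then obtain i j :: nat where ij: "i \<noteq> j" "z [^] i = z [^] j" unfolding inj_def by blast
  obtain a b :: nat where ab: "a < b" "z [^] a = z [^] b"
    using ij by (cases "i < j") (auto, metis linorder_neqE_nat)
  define p where "p = b - a"
  have pp: "p > 0" using ab p_def by simp
  have step: "z [^] (m + p) = z [^] m" if "m \<ge> a" for m
  proof -
    have "z [^] (m + p) = z [^] (a + p) \<otimes> z [^] (m - a)"
      using z that by (simp add: nat_pow_mult add.commute)
    also have "a + p = b" using ab p_def by simp
    also have "z [^] b \<otimes> z [^] (m - a) = z [^] a \<otimes> z [^] (m - a)" using ab by simp
    also have "\<dots> = z [^] m" using z that by (simp add: nat_pow_mult add.commute)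
    finally show ?thesis .
  qed
  have per: "z [^] (m + k * p) = z [^] m" if "m \<ge> a" for m k
  proof (induction k)
    case 0 then show ?case by simp
  next
    case (Suc k)
    have "z [^] (m + Suc k * p) = z [^] ((m + k * p) + p)" by (simp add: algebra_simps)
    also have "\<dots> = z [^] (m + k * p)" using step that by simp
    finally show ?case using Suc by simp
  qed
  define n where "n = (a + 1) * p"
  have "n > 0" "n \<ge> a" using pp n_def by (cases p; auto)+
  have "z [^] n \<otimes> z [^] n = z [^] (n + n)" using z by (simp add: nat_pow_mult)
  also have "\<dots> = z [^] n" using per[OF \<open>n \<ge> a\<close>, of "a+1"] n_def by simp
  finally show ?thesis using \<open>n > 0\<close> by blast
qed


lemma Rid_mem: "m \<in> carrier G \<Longrightarrow> m \<in> Rid G m"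
  unfolding Rid_def by (rule CollectI, rule exI[of _ "\<one>"]) simp
lemma Jid_mem: "m \<in> carrier G \<Longrightarrow> m \<in> Jid G m"
  unfolding Jid_def by (rule CollectI, rule exI[of _ "\<one>"], rule exI[of _ "\<one>"]) simp
lemma Rid_carrier: "m \<in> carrier G \<Longrightarrow> Rid G m \<subseteq> carrier G"
  unfolding Rid_def by auto
lemma Jid_carrier: "m \<in> carrier G \<Longrightarrow> Jid G m \<subseteq> carrier G"
  unfolding Jid_def by auto
lemma Rid_trans:
  assumes "x \<in> Rid G z" "z \<in> carrier G" shows "Rid G x \<subseteq> Rid G z"
proof
  fix w assume "w \<in> Rid G x"
  then obtain t where t: "t \<in> carrier G" "w = x \<otimes> t" unfolding Rid_def by auto
  obtain s where s: "s \<in> carrier G" "x = z \<otimes> s" using assms(1) unfolding Rid_def by auto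
  have "w = z \<otimes> (s \<otimes> t)" using s t assms by (simp add: m_assoc)
  thus "w \<in> Rid G z" unfolding Rid_def using s t by blast
qed
lemma Jid_trans:
  assumes "x \<in> Jid G z" "z \<in> carrier G" shows "Jid G x \<subseteq> Jid G z"
proof
  fix w assume "w \<in> Jid G x"
  then obtain a b where ab: "a \<in> carrier G" "b \<in> carrier G" "w = a \<otimes> x \<otimes> b" unfolding Jid_def by auto
  obtain c d where cd: "c \<in> carrier G" "d \<in> carrier G" "x = c \<otimes> z \<otimes> d" using assms(1) unfolding Jid_def by auto
  have "w = (a \<otimes> c) \<otimes> z \<otimes> (d \<otimes> b)" using ab cd assms by (simp add: m_assoc)
  thus "w \<in> Jid G z" unfolding Jid_def using ab cd by blast
qed
lemma Rid_Jid: "z \<in> carrier G \<Longrightarrow> Rid G z \<subseteq> Jid G z"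
proof
  fix w assume "z \<in> carrier G" "w \<in> Rid G z"
  then obtain t where "t \<in> carrier G" "w = z \<otimes> t" unfolding Rid_def by auto
  hence "w = \<one> \<otimes> z \<otimes> t" using \<open>z \<in> carrier G\<close> by simp
  thus "w \<in> Jid G z" unfolding Jid_def using \<open>t \<in> carrier G\<close> by blast
qed
lemma Jid_mult:
  assumes "x \<in> carrier G" "a \<in> carrier G"
  shows "Jid G (x \<otimes> a) \<subseteq> Jid G x \<inter> Jid G a"
proof -
  have "x \<otimes> a = \<one> \<otimes> x \<otimes> a" "x \<otimes> a = x \<otimes> a \<otimes> \<one>" using assms by simp_all
  hence "x \<otimes> a \<in> Jid G x" "x \<otimes> a \<in> Jid G a" unfolding Jid_def using assms by blast+
  thus ?thesis using Jid_trans assms by (meson le_inf_iff m_closed)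
qed

lemma stability:
  assumes fin: "finite (carrier G)" and x: "x \<in> carrier G" and a: "a \<in> carrier G"
    and J: "x \<in> Jid G (x \<otimes> a)"
  shows "x \<in> Rid G (x \<otimes> a)"
proof -
  obtain u v where uv: "u \<in> carrier G" "v \<in> carrier G" "x = u \<otimes> (x \<otimes> a) \<otimes> v"
    using J unfolding Jid_def by blast
  define w where "w = a \<otimes> v"
  have w: "w \<in> carrier G" using a uv(1,2) w_def by simp
  have e: "u \<otimes> (x \<otimes> a) \<otimes> v = u \<otimes> x \<otimes> w" using uv(1,2) x a w_def by (simp add: m_assoc)
  have xw: "x = u \<otimes> x \<otimes> w" using uv(3) e by (rule trans)
  have k: "x = u [^] k \<otimes> x \<otimes> w [^] k" for k :: nat
  proof (induction k)
    case 0 then show ?case using x by simp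
  next
    case (Suc k)
    have "u [^] Suc k \<otimes> x \<otimes> w [^] Suc k = (u [^] k \<otimes> u) \<otimes> x \<otimes> (w \<otimes> w [^] k)"
      by (subst nat_pow_Suc2[OF w]) simp
    also have "\<dots> = u [^] k \<otimes> (u \<otimes> x \<otimes> w) \<otimes> w [^] k"
      using uv(1,2) w x by (simp add: m_assoc)
    also have "\<dots> = u [^] k \<otimes> x \<otimes> w [^] k" by (simp only: xw[symmetric])
    also have "\<dots> = x" by (rule sym[OF Suc.IH])
    finally show ?case by (rule sym)
  qed
  obtain n where n: "n > 0" "w [^] n \<otimes> w [^] n = w [^] (n::nat)" using idem_pow[OF fin w] by blast
  have "x \<otimes> w [^] n = (u [^] n \<otimes> x \<otimes> w [^] n) \<otimes> w [^] n"
    by (rule arg_cong[of _ _ "\<lambda>t. t \<otimes> w [^] n", OF k[of n]])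
  also have "\<dots> = u [^] n \<otimes> x \<otimes> (w [^] n \<otimes> w [^] n)"
    using uv(1,2) w x by (simp add: m_assoc)
  also have "\<dots> = u [^] n \<otimes> x \<otimes> w [^] n" using n(2) by simp
  also have "\<dots> = x" using k[of n] by (rule sym)
  finally have xe: "x \<otimes> w [^] n = x" .
  have "w [^] n = w [^] Suc (n - 1)" using n by simp
  also have "\<dots> = w \<otimes> w [^] (n - 1)" by (rule nat_pow_Suc2[OF w])
  also have "\<dots> = a \<otimes> (v \<otimes> w [^] (n - 1))" unfolding w_def using a uv(1,2) w by (simp add: m_assoc)
  finally have "w [^] n = a \<otimes> (v \<otimes> w [^] (n - 1))" .
  hence "x = (x \<otimes> a) \<otimes> (v \<otimes> w [^] (n - 1))" using xe x a uv(1,2) w by (simp add: m_assoc)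
  thus ?thesis unfolding Rid_def using uv w by blast
qed

lemma le1_char:
  assumes fin: "finite (carrier G)" and x: "x \<in> carrier G" and y: "y \<in> carrier G"
  shows "le1 G x y \<longleftrightarrow> x \<in> Jid G (x \<otimes> y)"
proof
  assume "le1 G x y"
  thus "x \<in> Jid G (x \<otimes> y)" unfolding le1_def using Rid_mem Rid_Jid x y by blast
next
  assume "x \<in> Jid G (x \<otimes> y)"
  from stability[OF fin x y this] show "le1 G x y"
    unfolding le1_def using Rid_trans x y by simp
qed

lemma Gprime:
  assumes fin: "finite (carrier G)" and T: "total_rel_on (carrier G) (le1 G)"
    and x: "x \<in> carrier G" and y: "y \<in> carrier G" and J: "y \<in> Jid G (y \<otimes> x)"
  shows "y \<in> Jid G (x \<otimes> y)"
proof -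
  define z where "z = y \<otimes> x"
  have z: "z \<in> carrier G" using x y z_def by simp
  obtain t where t: "t \<in> carrier G" "y = z \<otimes> t"
    using stability[OF fin y x J] unfolding Rid_def z_def by auto
  have "le1 G z z" using T z unfolding total_rel_on_def by blast
  hence "z \<in> Rid G (z \<otimes> z)" unfolding le1_def using Rid_mem z by blast
  then obtain b where b: "b \<in> carrier G" "z = z \<otimes> z \<otimes> b" unfolding Rid_def by auto
  have k: "\<exists>c\<in>carrier G. z = z [^] Suc k \<otimes> c" for k
  proof (induction k)
    case 0
    have "z [^] Suc 0 \<otimes> (z \<otimes> b) = z \<otimes> z \<otimes> b" using z b(1) by (simp add: m_assoc)
    hence "z = z [^] Suc 0 \<otimes> (z \<otimes> b)" by (rule trans[OF b(2) sym])
    thus ?case using z b(1) by blast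
  next
    case (Suc k)
    then obtain c where c: "c \<in> carrier G" "z = z [^] Suc k \<otimes> c" by blast
    have "z [^] Suc k \<otimes> c = z [^] k \<otimes> z \<otimes> c" by simp
    also have "\<dots> = z [^] k \<otimes> (z \<otimes> z \<otimes> b) \<otimes> c" by (simp only: b(2)[symmetric])
    also have "\<dots> = z [^] Suc (Suc k) \<otimes> (b \<otimes> c)" using z b(1) c(1) by (simp add: m_assoc)
    finally have "z = z [^] Suc (Suc k) \<otimes> (b \<otimes> c)" by (rule trans[OF c(2)])
    moreover have "b \<otimes> c \<in> carrier G" using b(1) c(1) by simp
    ultimately show ?case by blast
  qed
  obtain n where n: "n > 0" "z [^] n \<otimes> z [^] n = z [^] (n::nat)" using idem_pow[OF fin z] by blast
  obtain c where c: "c \<in> carrier G" "z = z [^] n \<otimes> c" using k[of "n - 1"] n by auto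
  have zn: "z [^] n \<in> carrier G" using z by simp
  have "z [^] n \<otimes> z = z [^] n \<otimes> (z [^] n \<otimes> c)" using c(2) by (rule arg_cong)
  also have "\<dots> = z [^] n \<otimes> c" using zn c(1) n(2) by (simp add: m_assoc[symmetric])
  finally have gz: "z [^] n \<otimes> z = z" by (rule trans[OF _ c(2)[symmetric]])
  have "z [^] n \<otimes> y = z [^] n \<otimes> (z \<otimes> t)" using t(2) by (rule arg_cong)
  also have "\<dots> = z \<otimes> t" using zn z t(1) gz by (simp add: m_assoc[symmetric])
  finally have gy: "z [^] n \<otimes> y = y" by (rule trans[OF _ t(2)[symmetric]])
  have "z [^] n = z [^] Suc (n - 1)" using n by simp
  also have "\<dots> = z [^] (n - 1) \<otimes> y \<otimes> x" using x y z_def by (simp add: m_assoc)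
  finally have "z [^] n = z [^] (n - 1) \<otimes> y \<otimes> x" .
  hence "y = (z [^] (n - 1) \<otimes> y) \<otimes> (x \<otimes> y) \<otimes> \<one>" using gy x y z by (simp add: m_assoc)
  thus ?thesis unfolding Jid_def using x y z by blast
qed

lemma T1_C4:
  assumes fin: "finite (carrier G)" and T: "total_rel_on (carrier G) (le1 G)"
  shows "cond4 G"
  unfolding cond4_def
proof (intro conjI ballI)
  fix x y assume x: "x \<in> carrier G" and y: "y \<in> carrier G"
  have c: "x \<in> Jid G (x \<otimes> y) \<or> y \<in> Jid G (y \<otimes> x)"
    using T x y le1_char[OF fin] unfolding total_rel_on_def by blast
  have xy: "x \<otimes> y \<in> carrier G" "y \<otimes> x \<in> carrier G" using x y by simp_all
  have m1: "Jid G (x \<otimes> y) \<subseteq> Jid G x \<inter> Jid G y" using Jid_mult x y .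
  have m2: "Jid G (y \<otimes> x) \<subseteq> Jid G y \<inter> Jid G x" using Jid_mult y x .
  show "Jid G x \<subseteq> Jid G y \<or> Jid G y \<subseteq> Jid G x"
  proof (cases "x \<in> Jid G (x \<otimes> y)")
    case True
    then have "Jid G x \<subseteq> Jid G (x \<otimes> y)" using Jid_trans xy by blast
    then show ?thesis using m1 by blast
  next
    case False
    then have "y \<in> Jid G (y \<otimes> x)" using c by blast
    then have "Jid G y \<subseteq> Jid G (y \<otimes> x)" using Jid_trans xy by blast
    then show ?thesis using m2 by blast
  qed
  show "Jid G (x \<otimes> y) = Jid G x \<inter> Jid G y"
  proof
    show "Jid G (x \<otimes> y) \<subseteq> Jid G x \<inter> Jid G y" using m1 .
    show "Jid G x \<inter> Jid G y \<subseteq> Jid G (x \<otimes> y)"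
    proof (cases "x \<in> Jid G (x \<otimes> y)")
      case True
      then have "Jid G x \<subseteq> Jid G (x \<otimes> y)" using Jid_trans xy by blast
      then show ?thesis by blast
    next
      case False
      then have "y \<in> Jid G (y \<otimes> x)" using c by blast
      then have "y \<in> Jid G (x \<otimes> y)" using Gprime[OF fin T x y] by blast
      then have "Jid G y \<subseteq> Jid G (x \<otimes> y)" using Jid_trans xy by blast
      then show ?thesis by blast
    qed
  qed
qed

lemma C4_le3:
  assumes C: "cond4 G" and x: "x \<in> carrier G" and y: "y \<in> carrier G"
  shows "le3 G x y \<longleftrightarrow> Jid G x \<subseteq> Jid G y"
proof -
  have "Jid G (x \<otimes> y) = Jid G x \<inter> Jid G y" "Jid G (y \<otimes> x) = Jid G y \<inter> Jid G x"
    using C x y unfolding cond4_def by blast+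
  thus ?thesis unfolding le3_def by blast
qed

lemma C4_le1:
  assumes fin: "finite (carrier G)" and C: "cond4 G" and x: "x \<in> carrier G" and y: "y \<in> carrier G"
  shows "le1 G x y \<longleftrightarrow> Jid G x \<subseteq> Jid G y"
proof -
  have xy: "x \<otimes> y \<in> carrier G" using x y by simp
  have "le1 G x y \<longleftrightarrow> Jid G x \<subseteq> Jid G (x \<otimes> y)"
    using le1_char[OF fin x y] Jid_trans[OF _ xy] Jid_mem[OF x] by blast
  moreover have "Jid G (x \<otimes> y) = Jid G x \<inter> Jid G y" using C x y unfolding cond4_def by blast
  ultimately show ?thesis by blast
qed

lemma C4_T3:
  assumes C: "cond4 G" shows "total_rel_on (carrier G) (le3 G)"
  unfolding total_rel_on_def
proof (intro ballI)
  fix x y assume x: "x \<in> carrier G" and y: "y \<in> carrier G"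
  have "Jid G x \<subseteq> Jid G y \<or> Jid G y \<subseteq> Jid G x" using C x y unfolding cond4_def by blast
  thus "le3 G x y \<or> le3 G y x" using C4_le3[OF C x y] C4_le3[OF C y x] by blast
qed

end

definition opM :: "('a,'b) monoid_scheme \<Rightarrow> 'a monoid" where
  "opM M = \<lparr>carrier = carrier M, mult = (\<lambda>x y. y \<otimes>\<^bsub>M\<^esub> x), one = \<one>\<^bsub>M\<^esub>\<rparr>"

lemma opM_monoid: "monoid M \<Longrightarrow> monoid (opM M)"
  by (rule monoidI) (auto simp: monoid.m_assoc monoid.m_closed opM_def)

lemma opM_mult[simp]: "x \<otimes>\<^bsub>opM M\<^esub> y = y \<otimes>\<^bsub>M\<^esub> x" by (simp add: opM_def)
lemma opM_carrier[simp]: "carrier (opM M) = carrier M" by (simp add: opM_def)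

lemma opM_Jid: "monoid M \<Longrightarrow> x \<in> carrier M \<Longrightarrow> Jid (opM M) x = Jid M x"
proof -
  assume M: "monoid M" and x: "x \<in> carrier M"
  show ?thesis
  proof (intro equalityI subsetI)
    fix w assume "w \<in> Jid (opM M) x"
    then obtain a b where ab: "a \<in> carrier M" "b \<in> carrier M" "w = b \<otimes>\<^bsub>M\<^esub> (x \<otimes>\<^bsub>M\<^esub> a)"
      unfolding Jid_def opM_mult opM_carrier by blast
    have "b \<otimes>\<^bsub>M\<^esub> (x \<otimes>\<^bsub>M\<^esub> a) = b \<otimes>\<^bsub>M\<^esub> x \<otimes>\<^bsub>M\<^esub> a"
      using ab(1,2) x M by (simp add: monoid.m_assoc)
    hence "w = b \<otimes>\<^bsub>M\<^esub> x \<otimes>\<^bsub>M\<^esub> a" using ab(3) by simp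
    thus "w \<in> Jid M x" unfolding Jid_def using ab(1,2) by blast
  next
    fix w assume "w \<in> Jid M x"
    then obtain a b where ab: "a \<in> carrier M" "b \<in> carrier M" "w = a \<otimes>\<^bsub>M\<^esub> x \<otimes>\<^bsub>M\<^esub> b"
      unfolding Jid_def by blast
    have "a \<otimes>\<^bsub>M\<^esub> x \<otimes>\<^bsub>M\<^esub> b = b \<otimes>\<^bsub>opM M\<^esub> x \<otimes>\<^bsub>opM M\<^esub> a"
      using ab(1,2) x M by (simp add: monoid.m_assoc)
    hence "w = b \<otimes>\<^bsub>opM M\<^esub> x \<otimes>\<^bsub>opM M\<^esub> a" using ab(3) by simp
    thus "w \<in> Jid (opM M) x" unfolding Jid_def opM_carrier using ab(1,2) by blast
  qed
qed

lemma opM_le2: "le2 M x y = le1 (opM M) x y"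
  unfolding le2_def le1_def Lid_def Rid_def opM_def by simp

lemma opM_le3: "monoid M \<Longrightarrow> x \<in> carrier M \<Longrightarrow> y \<in> carrier M \<Longrightarrow> le3 (opM M) x y = le3 M x y"
  unfolding le3_def opM_mult by (simp add: opM_Jid monoid.m_closed) blast

lemma opM_cond4: "monoid M \<Longrightarrow> cond4 (opM M) = cond4 M"
  unfolding cond4_def opM_mult opM_carrier by (simp add: opM_Jid monoid.m_closed Int_commute) blast


lemma fun_monoid_facts:
  assumes Q: "finite Q" and S: "S \<subseteq> Q \<rightarrow>\<^sub>E Q" and one: "restrict id Q \<in> S"
    and cl: "\<forall>f\<in>S. \<forall>g\<in>S. compose Q f g \<in> S"
  shows "monoid (fun_monoid Q S)" "finite (carrier (fun_monoid Q S))"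
proof -
  have PQ: "f \<in> Q \<rightarrow> Q" "f \<in> extensional Q" if "f \<in> S" for f
    using S that by (auto simp: PiE_iff)
  have rid: "restrict id Q = (\<lambda>y\<in>Q. y)" by (simp add: id_def)
  show "monoid (fun_monoid Q S)"
  proof (rule monoidI)
    fix x y z assume x: "x \<in> carrier (fun_monoid Q S)" and y: "y \<in> carrier (fun_monoid Q S)"
      and z: "z \<in> carrier (fun_monoid Q S)"
    show "x \<otimes>\<^bsub>fun_monoid Q S\<^esub> y \<in> carrier (fun_monoid Q S)"
      using cl x y by (simp add: fun_monoid_def)
    show "x \<otimes>\<^bsub>fun_monoid Q S\<^esub> y \<otimes>\<^bsub>fun_monoid Q S\<^esub> z =
          x \<otimes>\<^bsub>fun_monoid Q S\<^esub> (y \<otimes>\<^bsub>fun_monoid Q S\<^esub> z)"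
      using compose_assoc[of z Q Q x y] PQ(1)[of z] z by (simp add: fun_monoid_def)
  next
    show "\<one>\<^bsub>fun_monoid Q S\<^esub> \<in> carrier (fun_monoid Q S)" using one by (simp add: fun_monoid_def)
  next
    fix x assume x: "x \<in> carrier (fun_monoid Q S)"
    show "\<one>\<^bsub>fun_monoid Q S\<^esub> \<otimes>\<^bsub>fun_monoid Q S\<^esub> x = x"
      using Id_compose[OF PQ] x by (simp add: fun_monoid_def rid)
    show "x \<otimes>\<^bsub>fun_monoid Q S\<^esub> \<one>\<^bsub>fun_monoid Q S\<^esub> = x"
      using compose_Id[OF PQ] x by (simp add: fun_monoid_def rid)
  qed
  have "finite (Q \<rightarrow>\<^sub>E Q)" using Q by (intro finite_PiE)
  thus "finite (carrier (fun_monoid Q S))" using S finite_subset by (auto simp: fun_monoid_def)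
qed

lemma fun_le1_img:
  assumes Q: "finite Q" and S: "S \<subseteq> Q \<rightarrow>\<^sub>E Q" and one: "restrict id Q \<in> S"
    and cl: "\<forall>f\<in>S. \<forall>g\<in>S. compose Q f g \<in> S"
    and f: "f \<in> S" and g: "g \<in> S" and le: "le1 (fun_monoid Q S) f g"
  shows "img_le Q f g"
proof -
  let ?M = "fun_monoid Q S"
  have mM: "monoid ?M" using fun_monoid_facts[OF Q S one cl] by blast
  have "f \<in> Rid ?M f" using monoid.Rid_mem[OF mM] f by (simp add: fun_monoid_def)
  hence "f \<in> Rid ?M (compose Q f g)" using le unfolding le1_def by (auto simp: fun_monoid_def)
  then obtain h where h: "h \<in> S" "f = compose Q (compose Q f g) h"
    unfolding Rid_def by (auto simp: fun_monoid_def)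
  have hQ: "h q \<in> Q" if "q \<in> Q" for q using S h(1) that by (auto simp: PiE_iff)
  show ?thesis unfolding img_le_def
  proof
    fix y assume "y \<in> f ` Q"
    then obtain q where q: "q \<in> Q" "y = f q" by blast
    have "f q = compose Q (compose Q f g) h q" using h(2) by (rule arg_cong)
    also have "\<dots> = compose Q f g (h q)" using q by (simp add: compose_eq)
    finally show "y \<in> compose Q f g ` Q" using q hQ by auto
  qed
qed

lemma fun_img_le1:
  assumes Q: "finite Q" and S: "S \<subseteq> Q \<rightarrow>\<^sub>E Q" and one: "restrict id Q \<in> S"
    and cl: "\<forall>f\<in>S. \<forall>g\<in>S. compose Q f g \<in> S"
    and T: "total_rel_on S (img_le Q)"
    and f: "f \<in> S" and g: "g \<in> S" and le: "img_le Q f g"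
  shows "le1 (fun_monoid Q S) f g"
proof -
  let ?M = "fun_monoid Q S"
  have mM: "monoid ?M" and fin: "finite (carrier ?M)" using fun_monoid_facts[OF Q S one cl] by blast+
  have mult: "a \<otimes>\<^bsub>?M\<^esub> b = compose Q a b" for a b by (simp add: fun_monoid_def)
  have car: "carrier ?M = S" by (simp add: fun_monoid_def)
  have PQ: "a q \<in> Q" if "a \<in> S" "q \<in> Q" for a q using S that by (auto simp: PiE_iff)
  have ext: "a \<in> extensional Q" if "a \<in> S" for a using S that by (auto simp: PiE_iff)
  define k where "k = compose Q f g"
  have k: "k \<in> S" using cl f g k_def by blast
  have kk: "img_le Q k k" using T k unfolding total_rel_on_def by blast
  have img_comp: "compose Q a b ` Q = a ` (b ` Q)" if "b \<in> S" for a b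
    using that PQ by (auto simp: compose_eq image_iff) 
  have kf: "k ` Q = f ` Q"
  proof
    show "f ` Q \<subseteq> k ` Q" using le k_def unfolding img_le_def by simp
    show "k ` Q \<subseteq> f ` Q" unfolding k_def using img_comp[OF g, of f] PQ[OF g] by auto
  qed
  have kk2: "k ` (k ` Q) = k ` Q"
  proof
    show "k ` Q \<subseteq> k ` (k ` Q)" using kk img_comp[OF k, of k] unfolding img_le_def by simp
    show "k ` (k ` Q) \<subseteq> k ` Q" using PQ[OF k] by auto
  qed
  have powimg: "(k [^]\<^bsub>?M\<^esub> Suc m) ` Q = k ` Q" for m
  proof (induction m)
    case 0
    have "k [^]\<^bsub>?M\<^esub> Suc 0 = k" using monoid.nat_pow_Suc2[OF mM, of k 0] k car
      monoid.r_one[OF mM, of k] by simp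
    then show ?case by simp
  next
    case (Suc m)
    have "k [^]\<^bsub>?M\<^esub> Suc (Suc m) = compose Q k (k [^]\<^bsub>?M\<^esub> Suc m)"
      using monoid.nat_pow_Suc2[OF mM, of k "Suc m"] k car mult by (simp del: nat_pow_Suc)
    moreover have "k [^]\<^bsub>?M\<^esub> Suc m \<in> S" using monoid.nat_pow_closed[OF mM, of k] k car by (simp del: nat_pow_Suc)
    ultimately show ?case using img_comp[of "k [^]\<^bsub>?M\<^esub> Suc m" k] Suc.IH kk2 by (simp del: nat_pow_Suc)
  qed
  obtain n where n: "n > 0" "k [^]\<^bsub>?M\<^esub> n \<otimes>\<^bsub>?M\<^esub> k [^]\<^bsub>?M\<^esub> n = k [^]\<^bsub>?M\<^esub> (n::nat)"
    using monoid.idem_pow[OF mM fin, of k] k car by blast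
  define e where "e = k [^]\<^bsub>?M\<^esub> n"
  have e: "e \<in> S" using monoid.nat_pow_closed[OF mM, of k] k car e_def by simp
  have eQ: "e ` Q = f ` Q" using powimg[of "n - 1"] n(1) kf e_def by simp
  have ee: "compose Q e e = e" using n(2) e_def mult by simp
  have efix: "e y = y" if yQ: "y \<in> e ` Q" for y
  proof -
    obtain q where q: "q \<in> Q" "y = e q" using yQ by blast
    have "e (e q) = compose Q e e q" using q by (simp add: compose_eq)
    also have "\<dots> = e q" using ee by simp
    finally show ?thesis using q by simp
  qed
  have ef: "compose Q e f = f"
  proof
    fix q show "compose Q e f q = f q"
    proof (cases "q \<in> Q")
      case True then show ?thesis using efix eQ by (simp add: compose_eq)
    next
      case False then show ?thesis using ext[OF f] by (simp add: compose_def extensional_def)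
    qed
  qed
  have "e = k \<otimes>\<^bsub>?M\<^esub> k [^]\<^bsub>?M\<^esub> (n - 1)"
    using monoid.nat_pow_Suc2[OF mM, of k "n - 1"] k car n(1) e_def by simp
  hence "f = k \<otimes>\<^bsub>?M\<^esub> (k [^]\<^bsub>?M\<^esub> (n - 1) \<otimes>\<^bsub>?M\<^esub> f)"
    using ef mult monoid.m_assoc[OF mM, of k "k [^]\<^bsub>?M\<^esub> (n - 1)" f] k f car
      monoid.nat_pow_closed[OF mM, of k] by simp
  moreover have "k [^]\<^bsub>?M\<^esub> (n - 1) \<otimes>\<^bsub>?M\<^esub> f \<in> carrier ?M"
    using monoid.nat_pow_closed[OF mM, of k] monoid.m_closed[OF mM] k f car by simp
  ultimately have "f \<in> Rid ?M k" unfolding Rid_def by blast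
  hence "Rid ?M f \<subseteq> Rid ?M k" using monoid.Rid_trans[OF mM] k car by simp
  thus ?thesis unfolding le1_def k_def mult .
qed


lemma le3_le1:
  assumes M: "monoid M" and fin: "finite (carrier M)" and x: "x \<in> carrier M" and y: "y \<in> carrier M"
    and l: "le3 M x y"
  shows "le1 M x y"
proof -
  have "x \<in> Jid M (x \<otimes>\<^bsub>M\<^esub> y)" using l monoid.Jid_mem[OF M x] unfolding le3_def by simp
  thus ?thesis using monoid.le1_char[OF M fin x y] by simp
qed

lemma part1:
  assumes M: "monoid M" and fin: "finite (carrier M)"
  shows "(total_rel_on (carrier M) (le1 M) \<longleftrightarrow> total_rel_on (carrier M) (le2 M))
          \<and> (total_rel_on (carrier M) (le2 M) \<longleftrightarrow> total_rel_on (carrier M) (le3 M))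
          \<and> (total_rel_on (carrier M) (le3 M) \<longleftrightarrow> cond4 M)
          \<and> (total_rel_on (carrier M) (le1 M) \<longrightarrow>
               (\<forall>x\<in>carrier M. \<forall>y\<in>carrier M.
                  (le1 M x y \<longleftrightarrow> le2 M x y) \<and> (le1 M x y \<longleftrightarrow> le3 M x y)))"
proof -
  have oM: "monoid (opM M)" using opM_monoid[OF M] .
  have ofin: "finite (carrier (opM M))" using fin by simp
  have l2: "le2 M = le1 (opM M)" by (intro ext) (rule opM_le2)
  have T2eq: "total_rel_on (carrier M) (le2 M) = total_rel_on (carrier (opM M)) (le1 (opM M))"
    using l2 by simp
  have a: "total_rel_on (carrier M) (le1 M) \<Longrightarrow> cond4 M" using monoid.T1_C4[OF M fin] .
  have b: "total_rel_on (carrier M) (le2 M) \<Longrightarrow> cond4 M"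
    using monoid.T1_C4[OF oM ofin] T2eq opM_cond4[OF M] by simp
  have c: "cond4 M \<Longrightarrow> total_rel_on (carrier M) (le3 M)" using monoid.C4_T3[OF M] .
  have d: "total_rel_on (carrier M) (le3 M) \<Longrightarrow> total_rel_on (carrier M) (le1 M)"
    using le3_le1[OF M fin] unfolding total_rel_on_def by blast
  have e: "total_rel_on (carrier M) (le3 M) \<Longrightarrow> total_rel_on (carrier M) (le2 M)"
  proof -
    assume T3: "total_rel_on (carrier M) (le3 M)"
    have "le2 M x y" if "x \<in> carrier M" "y \<in> carrier M" "le3 M x y" for x y
      using le3_le1[OF oM ofin, of x y] opM_le3[OF M, of x y] that l2 by simp
    thus ?thesis using T3 unfolding total_rel_on_def by blast
  qed
  have f: "(le1 M x y \<longleftrightarrow> le2 M x y) \<and> (le1 M x y \<longleftrightarrow> le3 M x y)"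
    if T1: "total_rel_on (carrier M) (le1 M)" and x: "x \<in> carrier M" and y: "y \<in> carrier M" for x y
  proof -
    have C: "cond4 M" using a T1 .
    have Co: "cond4 (opM M)" using C opM_cond4[OF M] by simp
    have "le1 M x y \<longleftrightarrow> Jid M x \<subseteq> Jid M y" using monoid.C4_le1[OF M fin C x y] .
    moreover have "le3 M x y \<longleftrightarrow> Jid M x \<subseteq> Jid M y" using monoid.C4_le3[OF M C x y] .
    moreover have "le2 M x y \<longleftrightarrow> Jid M x \<subseteq> Jid M y"
      using monoid.C4_le1[OF oM ofin Co, of x y] x y l2 opM_Jid[OF M x] opM_Jid[OF M y] by simp
    ultimately show ?thesis by blast
  qed
  have i1: "total_rel_on (carrier M) (le1 M) \<longleftrightarrow> total_rel_on (carrier M) (le2 M)"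
    using a b c d e by blast
  have i2: "total_rel_on (carrier M) (le2 M) \<longleftrightarrow> total_rel_on (carrier M) (le3 M)"
    using a b c d e by blast
  have i3: "total_rel_on (carrier M) (le3 M) \<longleftrightarrow> cond4 M"
    using a b c d e by blast
  have i4: "total_rel_on (carrier M) (le1 M) \<longrightarrow>
               (\<forall>x\<in>carrier M. \<forall>y\<in>carrier M.
                  (le1 M x y \<longleftrightarrow> le2 M x y) \<and> (le1 M x y \<longleftrightarrow> le3 M x y))"
    using f by blast
  show ?thesis using i1 i2 i3 i4 by (intro conjI)
qed

theorem lemma4p1:
  shows "(\<forall>M :: ('a,'b) monoid_scheme. monoid M \<and> finite (carrier M) \<longrightarrow>
            (total_rel_on (carrier M) (le1 M) \<longleftrightarrow> total_rel_on (carrier M) (le2 M))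
          \<and> (total_rel_on (carrier M) (le2 M) \<longleftrightarrow> total_rel_on (carrier M) (le3 M))
          \<and> (total_rel_on (carrier M) (le3 M) \<longleftrightarrow> cond4 M)
          \<and> (total_rel_on (carrier M) (le1 M) \<longrightarrow>
               (\<forall>x\<in>carrier M. \<forall>y\<in>carrier M.
                  (le1 M x y \<longleftrightarrow> le2 M x y) \<and> (le1 M x y \<longleftrightarrow> le3 M x y))))
      \<and> (\<forall>(Q :: 'q set) S. finite Q \<and> S \<subseteq> Q \<rightarrow>\<^sub>E Q \<and> restrict id Q \<in> S
            \<and> (\<forall>f\<in>S. \<forall>g\<in>S. compose Q f g \<in> S) \<longrightarrow>
            (total_rel_on S (le1 (fun_monoid Q S)) \<longleftrightarrow> total_rel_on S (img_le Q)))"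
proof (rule conjI)
  show "\<forall>M :: ('a,'b) monoid_scheme. monoid M \<and> finite (carrier M) \<longrightarrow>
            (total_rel_on (carrier M) (le1 M) \<longleftrightarrow> total_rel_on (carrier M) (le2 M))
          \<and> (total_rel_on (carrier M) (le2 M) \<longleftrightarrow> total_rel_on (carrier M) (le3 M))
          \<and> (total_rel_on (carrier M) (le3 M) \<longleftrightarrow> cond4 M)
          \<and> (total_rel_on (carrier M) (le1 M) \<longrightarrow>
               (\<forall>x\<in>carrier M. \<forall>y\<in>carrier M.
                  (le1 M x y \<longleftrightarrow> le2 M x y) \<and> (le1 M x y \<longleftrightarrow> le3 M x y)))"
    by (intro allI impI, erule conjE, rule part1)
next
  show "\<forall>(Q :: 'q set) S. finite Q \<and> S \<subseteq> Q \<rightarrow>\<^sub>E Q \<and> restrict id Q \<in> S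
            \<and> (\<forall>f\<in>S. \<forall>g\<in>S. compose Q f g \<in> S) \<longrightarrow>
            (total_rel_on S (le1 (fun_monoid Q S)) \<longleftrightarrow> total_rel_on S (img_le Q))"
  proof (intro allI impI)
  fix Q :: "'q set" and S
  assume H: "finite Q \<and> S \<subseteq> Q \<rightarrow>\<^sub>E Q \<and> restrict id Q \<in> S \<and> (\<forall>f\<in>S. \<forall>g\<in>S. compose Q f g \<in> S)"
  hence Q: "finite Q" and S: "S \<subseteq> Q \<rightarrow>\<^sub>E Q" and one: "restrict id Q \<in> S"
    and cl: "\<forall>f\<in>S. \<forall>g\<in>S. compose Q f g \<in> S" by blast+
  show "total_rel_on S (le1 (fun_monoid Q S)) \<longleftrightarrow> total_rel_on S (img_le Q)"
  proof
    assume T: "total_rel_on S (le1 (fun_monoid Q S))"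
    show "total_rel_on S (img_le Q)"
      using T fun_le1_img[OF Q S one cl] unfolding total_rel_on_def by blast
  next
    assume T: "total_rel_on S (img_le Q)"
    show "total_rel_on S (le1 (fun_monoid Q S))"
      using T fun_img_le1[OF Q S one cl T] unfolding total_rel_on_def by blast
  qed
  qed
qed

end
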